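(* Let $\omega\in\Omega_+$. If \[\liminf_{K\to\infty}\frac1K\sum_{x=0}^{K-1}\delta^x(\omega)<1,\] then $0$ is $\omega$-recurrent.
   Context: Cookie environments: $\Omega_+=([1/2,1]^{\mathbb N})^{\mathbb Z}$. $P_{x,\omega}$ is the law of the nearest-neighbor process $(X_n)_{n\ge0}$ with $X_0=x$ which, on its $i$-th visit to site $z$, jumps to $z+1$ with probability $\omega(z,i)$ and to $z-1$ otherwise. $\delta^x(\omega)=\sum_{i\ge1}(2\omega(x,i)-1)\in[0,\infty]$. $R_k=\{X_n=k\text{ i.o.}\}$; a site $y$ is $\omega$-recurrent if $P_{x,\omega}[R_y]=1$ for all $x\in\mathbb Z$. *)

theory Defs
  imports "HOL-Probability.Probability"
begin

text \<open>Cookie environments: omega z i is the probability of jumping right on the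
  i-th visit (i >= 1) to site z.  Index i = 0 is unused.\<close>

definition cookie_env :: "(int \<Rightarrow> nat \<Rightarrow> real) \<Rightarrow> bool" where
  "cookie_env \<omega> \<longleftrightarrow> (\<forall>z i. i \<ge> 1 \<longrightarrow> 1/2 \<le> \<omega> z i \<and> \<omega> z i \<le> 1)"

text \<open>Independent coin flips c (z,i), true with probability omega z i;
  the walk uses coin c (z,i) on its i-th visit to z (cookie-stack construction).\<close>

definition coins :: "(int \<Rightarrow> nat \<Rightarrow> real) \<Rightarrow> (int \<times> nat \<Rightarrow> bool) measure" where
  "coins \<omega> = PiM UNIV (\<lambda>(z, i). measure_pmf (bernoulli_pmf (\<omega> z i)))"

text \<open>State at time n: current position and number of visits made strictly before time n
  to each site.\<close>

primrec walk_state :: "(int \<times> nat \<Rightarrow> bool) \<Rightarrow> int \<Rightarrow> nat \<Rightarrow> int \<times> (int \<Rightarrow> nat)" where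
  "walk_state c x 0 = (x, (\<lambda>_. 0))"
| "walk_state c x (Suc n) =
     (let (p, v) = walk_state c x n; i = Suc (v p)
      in (if c (p, i) then p + 1 else p - 1, v(p := i)))"

definition walk :: "(int \<times> nat \<Rightarrow> bool) \<Rightarrow> int \<Rightarrow> nat \<Rightarrow> int" where
  "walk c x n = fst (walk_state c x n)"

definition drift :: "(int \<Rightarrow> nat \<Rightarrow> real) \<Rightarrow> int \<Rightarrow> ennreal" where
  "drift \<omega> x = (\<Sum>i. ennreal (2 * \<omega> x (Suc i) - 1))"

definition recurrent_site :: "(int \<Rightarrow> nat \<Rightarrow> real) \<Rightarrow> int \<Rightarrow> bool" where
  "recurrent_site \<omega> y \<longleftrightarrow>
     (\<forall>x. measure (coins \<omega>) {c \<in> space (coins \<omega>). \<forall>N. \<exists>n\<ge>N. walk c x n = y} = 1)"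

end

theory Submission
  imports Defs
begin

definition cdx :: "int list \<Rightarrow> int \<times> nat" where
  "cdx g = (last g, Suc (count_list (butlast g) (last g)))"

definition nxs :: "(int \<times> nat \<Rightarrow> bool) \<Rightarrow> int list \<Rightarrow> int" where
  "nxs c g = (if c (cdx g) then last g + 1 else last g - 1)"

primrec gen :: "(int \<times> nat \<Rightarrow> bool) \<Rightarrow> int list \<Rightarrow> nat \<Rightarrow> int list" where
  "gen c h 0 = h"
| "gen c h (Suc n) = gen c h n @ [nxs c (gen c h n)]"

primrec ext :: "int list \<Rightarrow> nat \<Rightarrow> int list set" where
  "ext h 0 = {h}"
| "ext h (Suc n) = (\<lambda>g. g @ [last g + 1]) ` ext h n \<union> (\<lambda>g. g @ [last g - 1]) ` ext h n"

lemma finite_ext: "finite (ext h n)"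
  by (induction n) auto

lemma ext_shape: "g \<in> ext h n \<Longrightarrow> \<exists>t. g = h @ t \<and> length t = n"
  by (induction n arbitrary: g) fastforce+

lemma gen_in_ext: "gen c h n \<in> ext h n"
  by (induction n) (auto simp: nxs_def)

lemma gen_add: "gen c h (n + m) = gen c (gen c h n) m"
  by (induction m) auto

lemma walk_gen: "walk_state c x n = (last (gen c [x] n), count_list (butlast (gen c [x] n)))"
proof (induction n)
  case 0 then show ?case by (auto simp: fun_eq_iff)
next
  case (Suc n)
  define g where "g = gen c [x] n"
  have ne: "g \<noteq> []" unfolding g_def by (induction n) auto
  have cg: "count_list g = (count_list (butlast g)) (last g := Suc (count_list (butlast g) (last g)))"
  proof
    fix z
    have "count_list (butlast g @ [last g]) z = ((count_list (butlast g)) (last g := Suc (count_list (butlast g) (last g)))) z"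
      by simp
    then show "count_list g z = ((count_list (butlast g)) (last g := Suc (count_list (butlast g) (last g)))) z"
      using append_butlast_last_id[OF ne] by metis
  qed
  show ?case using Suc unfolding g_def[symmetric]
    by (simp add: g_def[symmetric] nxs_def cdx_def cg fun_upd_def)
qed

lemma walk_eq: "walk c x n = last (gen c [x] n)"
  unfolding walk_def walk_gen by simp

locale cenv =
  fixes \<omega> :: "int \<Rightarrow> nat \<Rightarrow> real"
  assumes env: "cookie_env \<omega>"
begin

abbreviation "M \<equiv> coins \<omega>"
abbreviation "Mi \<equiv> (\<lambda>(z, i). measure_pmf (bernoulli_pmf (\<omega> z i)))"

lemma space_M[simp]: "space M = UNIV"
  unfolding coins_def space_PiM by (auto simp: split_beta)

lemma sets_Mi[simp]: "sets (Mi j) = UNIV"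
  by (simp add: split_beta)

lemma prob_M: "prob_space M"
  unfolding coins_def by (rule prob_space_PiM) (auto simp: split_beta intro: measure_pmf.prob_space_axioms)

lemma meas_coord: "(\<lambda>c. c j) \<in> measurable M (count_space UNIV)"
proof -
  have "(\<lambda>c. c j) \<in> measurable M (Mi j)"
    unfolding coins_def by (rule measurable_component_singleton) simp
  then show ?thesis by (simp add: measurable_def split_beta)
qed

lemma meas_gen: "(\<lambda>c. gen c h n) \<in> measurable M (count_space UNIV)"
proof (induction n)
  case 0 then show ?case by simp
next
  case (Suc n)
  have "(\<lambda>c. (\<lambda>g c. g @ [nxs c g]) (gen c h n) c) \<in> measurable M (count_space UNIV)"
  proof (rule measurable_compose_countable[OF _ Suc])
    fix g :: "int list"
    have "(\<lambda>c. c (cdx g)) \<in> measurable M (count_space UNIV)" by (rule meas_coord)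
    then show "(\<lambda>c. g @ [nxs c g]) \<in> measurable M (count_space UNIV)"
    proof -
      have T: "{x. x (cdx g) = b} \<in> sets M" for b
        using measurable_sets[OF meas_coord, of "{b}" "cdx g"] by (simp add: vimage_def)
      have "{c. g @ [nxs c g] = a} \<in> sets M" for a
      proof -
        consider "a = g @ [last g + 1]" | "a = g @ [last g - 1]" | "a \<noteq> g @ [last g + 1] \<and> a \<noteq> g @ [last g - 1]" by blast
        then show ?thesis
        proof cases
          case 1 then have "{c. g @ [nxs c g] = a} = {x. x (cdx g) = True}" by (auto simp: nxs_def)
          then show ?thesis using T[of True] by simp
        next
          case 2 then have "{c. g @ [nxs c g] = a} = {x. x (cdx g) = False}" by (auto simp: nxs_def)
          then show ?thesis using T[of False] by simp
        next
          case 3 then have "{c. g @ [nxs c g] = a} = {}" by (auto simp: nxs_def)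
          then show ?thesis by simp
        qed
      qed
      then show ?thesis by (simp add: measurable_count_space_eq2_countable vimage_def)
    qed
  qed
  then show ?case by simp
qed

lemma sets_gen: "{c. P (gen c h n)} \<in> sets M"
proof -
  have "(\<lambda>c. gen c h n) -` {g. P g} \<inter> space M \<in> sets M"
    by (rule measurable_sets[OF meas_gen]) simp
  then show ?thesis by (simp add: vimage_def)
qed

lemma cyl_measure:
  assumes "finite F"
  shows "measure M {c. \<forall>j\<in>F. c j = B j} = (\<Prod>j\<in>F. pmf (bernoulli_pmf (\<omega> (fst j) (snd j))) (B j))"
proof -
  have eq: "{c. \<forall>j\<in>F. c j = B j} = prod_emb UNIV Mi F (Pi\<^sub>E F (\<lambda>j. {B j}))"
    by (auto simp: prod_emb_iff PiE_iff split_beta)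
  have "emeasure M {c. \<forall>j\<in>F. c j = B j} = (\<Prod>j\<in>F. emeasure (Mi j) {B j})"
    unfolding eq coins_def
    by (rule emeasure_PiM_emb) (auto simp: split_beta assms intro: measure_pmf.prob_space_axioms)
  also have "\<dots> = (\<Prod>j\<in>F. ennreal (pmf (bernoulli_pmf (\<omega> (fst j) (snd j))) (B j)))"
    by (simp add: split_beta emeasure_pmf_single)
  also have "\<dots> = ennreal (\<Prod>j\<in>F. pmf (bernoulli_pmf (\<omega> (fst j) (snd j))) (B j))"
    by (simp add: prod_ennreal pmf_nonneg)
  finally show ?thesis unfolding measure_def by (simp add: prod_nonneg pmf_nonneg)
qed


lemma count_snoc: "g \<noteq> [] \<Longrightarrow> count_list g z = count_list (butlast g) z + (if z = last g then 1 else 0)"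
proof -
  assume ne: "g \<noteq> []"
  have "count_list (butlast g @ [last g]) z = count_list (butlast g) z + (if z = last g then 1 else 0)" by simp
  then show ?thesis using append_butlast_last_id[OF ne] by metis
qed

lemma ext_ne: "h \<noteq> [] \<Longrightarrow> g \<in> ext h n \<Longrightarrow> g \<noteq> []"
  using ext_shape[of g h n] by auto

lemma gen_snoc_iff:
  assumes "y = last g + 1 \<or> y = last g - 1"
  shows "{c. gen c h (Suc n) = g @ [y]} = {c. gen c h n = g} \<inter> {c. c (cdx g) = (y = last g + 1)}"
proof (intro set_eqI iffI)
  fix c assume "c \<in> {c. gen c h (Suc n) = g @ [y]}"
  then have "gen c h n = g" "nxs c g = y" by auto
  then show "c \<in> {c. gen c h n = g} \<inter> {c. c (cdx g) = (y = last g + 1)}"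
    by (auto simp: nxs_def split: if_splits)
next
  fix c assume "c \<in> {c. gen c h n = g} \<inter> {c. c (cdx g) = (y = last g + 1)}"
  then have "gen c h n = g" "c (cdx g) = (y = last g + 1)" by auto
  then show "c \<in> {c. gen c h (Suc n) = g @ [y]}" using assms by (auto simp: nxs_def)
qed

lemma cyl_insert:
  assumes "k \<notin> F"
  shows "{c. \<forall>j\<in>F. c j = B j} \<inter> {c. c k = b} = {c. \<forall>j\<in>insert k F. c j = (B(k:=b)) j}"
proof (intro set_eqI iffI)
  fix c assume "c \<in> {c. \<forall>j\<in>F. c j = B j} \<inter> {c. c k = b}"
  then have a: "\<forall>j\<in>F. c j = B j" "c k = b" by auto
  show "c \<in> {c. \<forall>j\<in>insert k F. c j = (B(k:=b)) j}"
  proof (simp only: mem_Collect_eq, intro ballI)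
    fix j assume "j \<in> insert k F"
    then show "c j = (B(k:=b)) j" using a assms by (cases "j = k") auto
  qed
next
  fix c assume "c \<in> {c. \<forall>j\<in>insert k F. c j = (B(k:=b)) j}"
  then have a: "\<forall>j\<in>insert k F. c j = (B(k:=b)) j" by blast
  have "c k = b" using a by auto
  moreover have "\<forall>j\<in>F. c j = B j"
  proof
    fix j assume "j \<in> F"
    then have "j \<noteq> k" "c j = (B(k:=b)) j" using a assms by auto
    then show "c j = B j" by simp
  qed
  ultimately show "c \<in> {c. \<forall>j\<in>F. c j = B j} \<inter> {c. c k = b}" by blast
qed

lemma gen_cyl:
  assumes "h \<noteq> []" "g \<in> ext h n"
  shows "\<exists>F B. finite F \<and> (\<forall>j\<in>F. snd j \<le> count_list (butlast g) (fst j)) \<and> {c. gen c h n = g} = {c. \<forall>j\<in>F. c j = B j}"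
  using assms(2)
proof (induction n arbitrary: g)
  case 0
  then show ?case by (intro exI[of _ "{}"]) auto
next
  case (Suc n)
  then obtain g0 y where g0: "g0 \<in> ext h n" "g = g0 @ [y]" "y = last g0 + 1 \<or> y = last g0 - 1" by auto
  obtain F B where FB: "finite F" "\<forall>j\<in>F. snd j \<le> count_list (butlast g0) (fst j)" "{c. gen c h n = g0} = {c. \<forall>j\<in>F. c j = B j}"
    using Suc.IH[OF g0(1)] by (elim exE conjE) (rule that; assumption)
  have ne: "g0 \<noteq> []" using ext_ne[OF assms(1) g0(1)] .
  have nF: "cdx g0 \<notin> F" using FB(2) by (auto simp: cdx_def)
  have bl: "butlast g = g0" using g0(2) by simp
  show ?case
  proof (intro exI conjI)
    show "finite (insert (cdx g0) F)" using FB(1) by simp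
    show "\<forall>j\<in>insert (cdx g0) F. snd j \<le> count_list (butlast g) (fst j)"
    proof
      fix j assume j: "j \<in> insert (cdx g0) F"
      show "snd j \<le> count_list (butlast g) (fst j)"
      proof (cases "j = cdx g0")
        case True then show ?thesis unfolding bl using count_snoc[OF ne, of "last g0"] by (simp add: cdx_def)
      next
        case False
        then have "snd j \<le> count_list (butlast g0) (fst j)" using j FB(2) by auto
        then show ?thesis unfolding bl using count_snoc[OF ne, of "fst j"] by linarith
      qed
    qed
    show "{c. gen c h (Suc n) = g} = {c. \<forall>j\<in>insert (cdx g0) F. c j = (B(cdx g0 := (y = last g0 + 1))) j}"
      unfolding g0(2) gen_snoc_iff[OF g0(3)] FB(3) by (rule cyl_insert[OF nF])
  qed
qed

definition pg :: "int list \<Rightarrow> real" where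
  "pg g = \<omega> (last g) (Suc (count_list (butlast g) (last g)))"

lemma pg_bounds: "1/2 \<le> pg g" "pg g \<le> 1"
  using env unfolding cookie_env_def pg_def by auto

lemma sets_gen_eq: "{c. gen c h n = g} \<in> sets M"
  using sets_gen[of "\<lambda>x. x = g"] by simp

lemma pw_step:
  assumes "h \<noteq> []" "g \<in> ext h n" "y = last g + 1 \<or> y = last g - 1"
  shows "measure M {c. gen c h (Suc n) = g @ [y]} = measure M {c. gen c h n = g} * (if y = last g + 1 then pg g else 1 - pg g)"
proof -
  obtain F B where FB: "finite F" "\<forall>j\<in>F. snd j \<le> count_list (butlast g) (fst j)" "{c. gen c h n = g} = {c. \<forall>j\<in>F. c j = B j}"
    using gen_cyl[OF assms(1,2)] by (elim exE conjE) (rule that; assumption)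
  have nF: "cdx g \<notin> F" using FB(2) by (auto simp: cdx_def)
  have eqs: "{c. gen c h (Suc n) = g @ [y]} = {c. \<forall>j\<in>insert (cdx g) F. c j = (B(cdx g := (y = last g + 1))) j}"
    unfolding gen_snoc_iff[OF assms(3)] FB(3) by (rule cyl_insert[OF nF])
  have "measure M {c. gen c h (Suc n) = g @ [y]} = measure M {c. \<forall>j\<in>insert (cdx g) F. c j = (B(cdx g := (y = last g + 1))) j}"
    unfolding eqs ..
  also have "\<dots> = (\<Prod>j\<in>insert (cdx g) F. pmf (bernoulli_pmf (\<omega> (fst j) (snd j))) ((B(cdx g := (y = last g + 1))) j))"
    by (rule cyl_measure) (simp add: FB(1))
  also have "\<dots> = pmf (bernoulli_pmf (pg g)) (y = last g + 1) * (\<Prod>j\<in>F. pmf (bernoulli_pmf (\<omega> (fst j) (snd j))) ((B(cdx g := (y = last g + 1))) j))"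
    using nF FB(1) by (simp add: pg_def cdx_def)
  also have "(\<Prod>j\<in>F. pmf (bernoulli_pmf (\<omega> (fst j) (snd j))) ((B(cdx g := (y = last g + 1))) j)) = (\<Prod>j\<in>F. pmf (bernoulli_pmf (\<omega> (fst j) (snd j))) (B j))"
    using nF by (intro prod.cong refl) auto
  also have "(\<Prod>j\<in>F. pmf (bernoulli_pmf (\<omega> (fst j) (snd j))) (B j)) = measure M {c. gen c h n = g}"
    using FB cyl_measure by simp
  finally show ?thesis using pg_bounds[of g] by (auto simp: mult.commute)
qed

definition pw :: "int list \<Rightarrow> int list \<Rightarrow> real" where
  "pw h g = measure M {c. gen c h (length g - length h) = g}"

definition EE :: "int list \<Rightarrow> nat \<Rightarrow> (int list \<Rightarrow> real) \<Rightarrow> real" where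
  "EE h n f = (\<Sum>g\<in>ext h n. pw h g * f g)"

definition TT :: "(int list \<Rightarrow> real) \<Rightarrow> int list \<Rightarrow> real" where
  "TT f g = pg g * f (g @ [last g + 1]) + (1 - pg g) * f (g @ [last g - 1])"

lemma ext_len: "g \<in> ext h n \<Longrightarrow> length g - length h = n"
  using ext_shape[of g h n] by auto

lemma pw_ext: "g \<in> ext h n \<Longrightarrow> pw h g = measure M {c. gen c h n = g}"
  unfolding pw_def ext_len by simp

lemma pw_nonneg: "pw h g \<ge> 0"
  unfolding pw_def by simp

lemma EE_0: "EE h 0 f = f h"
proof -
  interpret prob_space M by (rule prob_M)
  have "pw h h = 1" unfolding pw_def using prob_space by simp
  then show ?thesis unfolding EE_def by simp
qed

lemma EE_Suc:
  assumes "h \<noteq> []"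
  shows "EE h (Suc n) f = EE h n (TT f)"
proof -
  let ?A = "(\<lambda>g. g @ [last g + 1]) ` ext h n" and ?B = "(\<lambda>g. g @ [last g - 1]) ` ext h n"
  have disj: "?A \<inter> ?B = {}" by auto
  have injA: "inj_on (\<lambda>g. g @ [last g + 1]) (ext h n)" by (rule inj_onI) simp
  have injB: "inj_on (\<lambda>g. g @ [last g - 1]) (ext h n)" by (rule inj_onI) simp
  have "EE h (Suc n) f = (\<Sum>g\<in>?A. pw h g * f g) + (\<Sum>g\<in>?B. pw h g * f g)"
    unfolding EE_def ext.simps by (rule sum.union_disjoint) (auto simp: finite_ext)
  also have "(\<Sum>g\<in>?A. pw h g * f g) = (\<Sum>g\<in>ext h n. pw h (g @ [last g + 1]) * f (g @ [last g + 1]))"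
    by (subst sum.reindex[OF injA]) simp
  also have "\<dots> = (\<Sum>g\<in>ext h n. pw h g * (pg g * f (g @ [last g + 1])))"
  proof (rule sum.cong[OF refl])
    fix g assume g: "g \<in> ext h n"
    have "g @ [last g + 1] \<in> ext h (Suc n)" using g by simp
    then have "pw h (g @ [last g + 1]) = measure M {c. gen c h (Suc n) = g @ [last g + 1]}" by (rule pw_ext)
    also have "\<dots> = pw h g * pg g" using pw_step[OF assms g, of "last g + 1"] pw_ext[OF g] by simp
    finally show "pw h (g @ [last g + 1]) * f (g @ [last g + 1]) = pw h g * (pg g * f (g @ [last g + 1]))" by simp
  qed
  also have "(\<Sum>g\<in>?B. pw h g * f g) = (\<Sum>g\<in>ext h n. pw h (g @ [last g - 1]) * f (g @ [last g - 1]))"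
    by (subst sum.reindex[OF injB]) simp
  also have "\<dots> = (\<Sum>g\<in>ext h n. pw h g * ((1 - pg g) * f (g @ [last g - 1])))"
  proof (rule sum.cong[OF refl])
    fix g assume g: "g \<in> ext h n"
    have "g @ [last g - 1] \<in> ext h (Suc n)" using g by simp
    then have "pw h (g @ [last g - 1]) = measure M {c. gen c h (Suc n) = g @ [last g - 1]}" by (rule pw_ext)
    also have "\<dots> = pw h g * (1 - pg g)" using pw_step[OF assms g, of "last g - 1"] pw_ext[OF g] by simp
    finally show "pw h (g @ [last g - 1]) * f (g @ [last g - 1]) = pw h g * ((1 - pg g) * f (g @ [last g - 1]))" by simp
  qed
  finally show ?thesis unfolding EE_def TT_def by (simp add: sum.distrib[symmetric] algebra_simps)
qed

lemma EE_cong: "(\<And>g. g \<in> ext h n \<Longrightarrow> f g = f' g) \<Longrightarrow> EE h n f = EE h n f'"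
  unfolding EE_def by (intro sum.cong) auto

lemma EE_mono: "(\<And>g. g \<in> ext h n \<Longrightarrow> f g \<le> f' g) \<Longrightarrow> EE h n f \<le> EE h n f'"
  unfolding EE_def by (intro sum_mono mult_left_mono pw_nonneg) auto

lemma EE_add: "EE h n (\<lambda>g. f g + f' g) = EE h n f + EE h n f'"
  unfolding EE_def by (simp add: algebra_simps sum.distrib)

lemma EE_diff: "EE h n (\<lambda>g. f g - f' g) = EE h n f - EE h n f'"
  unfolding EE_def by (simp add: algebra_simps sum_subtractf)

lemma EE_cmult: "EE h n (\<lambda>g. a * f g) = a * EE h n f"
  unfolding EE_def by (simp add: algebra_simps sum_distrib_left)

lemma EE_prob:
  assumes "h \<noteq> []"
  shows "measure M {c. P (gen c h n)} = EE h n (\<lambda>g. if P g then 1 else 0)"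
proof -
  interpret prob_space M by (rule prob_M)
  let ?S = "{g\<in>ext h n. P g}"
  have eq: "{c. P (gen c h n)} = (\<Union>g\<in>?S. {c. gen c h n = g})"
    using gen_in_ext[of _ h n] by auto
  have "measure M (\<Union>g\<in>?S. {c. gen c h n = g}) = (\<Sum>g\<in>?S. measure M {c. gen c h n = g})"
    by (rule measure_finite_Union) (auto simp: finite_ext sets_gen_eq disjoint_family_on_def)
  also have "\<dots> = (\<Sum>g\<in>?S. pw h g)" by (intro sum.cong refl) (simp add: pw_ext[symmetric])
  also have "\<dots> = EE h n (\<lambda>g. if P g then 1 else 0)"
    unfolding EE_def by (simp add: sum.inter_filter[symmetric] finite_ext if_distrib cong: if_cong)
  finally show ?thesis using eq by simp
qed

lemma EE_const:
  assumes "h \<noteq> []"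
  shows "EE h n (\<lambda>_. a) = a"
proof -
  interpret prob_space M by (rule prob_M)
  have "measure M {c. True} = 1" using prob_space by simp
  then have "EE h n (\<lambda>_. 1) = 1" using EE_prob[OF assms, of "\<lambda>_. True" n] by simp
  then show ?thesis using EE_cmult[of h n a "\<lambda>_. 1"] by simp
qed

lemma EE_tower:
  assumes "h \<noteq> []"
  shows "EE h (m + k) f = EE h m (\<lambda>g. EE g k f)"
proof (induction k arbitrary: f)
  case 0 then show ?case by (simp add: EE_0)
next
  case (Suc k)
  have "EE h (m + Suc k) f = EE h (m + k) (TT f)" using EE_Suc[OF assms] by simp
  also have "\<dots> = EE h m (\<lambda>g. EE g k (TT f))" by (rule Suc.IH)
  also have "\<dots> = EE h m (\<lambda>g. EE g (Suc k) f)"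
    by (rule EE_cong) (simp add: EE_Suc[OF ext_ne[OF assms]])
  finally show ?case .
qed

definition stp :: "int \<Rightarrow> int \<Rightarrow> int list \<times> int \<times> bool \<times> real \<Rightarrow> int \<Rightarrow> int list \<times> int \<times> bool \<times> real" where
  "stp a b s y = (case s of (g, xv, al, dr) \<Rightarrow>
     (g @ [y], if al then y else xv, al \<and> a < y \<and> y < b, dr + (if al then 2 * pg g - 1 else 0)))"

definition SS :: "int \<Rightarrow> int \<Rightarrow> int list \<Rightarrow> int list \<Rightarrow> int list \<times> int \<times> bool \<times> real" where
  "SS a b h g = foldl (stp a b) (h, last h, a < last h \<and> last h < b, 0) (drop (length h) g)"

definition XV where "XV a b h g = fst (snd (SS a b h g))"
definition AL where "AL a b h g = fst (snd (snd (SS a b h g)))"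
definition DR where "DR a b h g = snd (snd (snd (SS a b h g)))"

definition PL :: "int list \<Rightarrow> int list \<Rightarrow> int list" where
  "PL h g = drop (length h - 1) g"

lemma SS_h: "SS a b h h = (h, last h, a < last h \<and> last h < b, 0)"
  unfolding SS_def by simp

lemma SS_snoc: "g \<in> ext h n \<Longrightarrow> SS a b h (g @ [y]) = stp a b (SS a b h g) y"
proof -
  assume "g \<in> ext h n"
  then have "length h \<le> length g" using ext_shape[of g h n] by auto
  then show ?thesis unfolding SS_def by simp
qed

lemma PL_snoc: "g \<in> ext h n \<Longrightarrow> PL h (g @ [y]) = PL h g @ [y]"
proof -
  assume "g \<in> ext h n"
  then have "length h \<le> length g" using ext_shape[of g h n] by auto
  then show ?thesis unfolding PL_def by simp
qed

lemma PL_h: "h \<noteq> [] \<Longrightarrow> PL h h = [last h]"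
  unfolding PL_def by (cases h rule: rev_cases) auto

lemma SS_inv:
  assumes h: "h \<noteq> []" and ab: "a < last h" "last h < b" and g: "g \<in> ext h n"
  shows "fst (SS a b h g) = g
     \<and> (AL a b h g \<longrightarrow> XV a b h g = last g \<and> a < last g \<and> last g < b)
     \<and> a \<le> XV a b h g \<and> XV a b h g \<le> b
     \<and> (\<not> AL a b h g \<longrightarrow> XV a b h g = a \<or> XV a b h g = b)
     \<and> XV a b h g \<in> set (PL h g)
     \<and> (AL a b h g \<longleftrightarrow> (\<forall>y\<in>set (PL h g). a < y \<and> y < b))
     \<and> (\<exists>U. finite U \<and> (\<forall>j\<in>U. a < fst j \<and> fst j < b \<and> 1 \<le> snd j \<and> snd j \<le> count_list (butlast g) (fst j))
           \<and> DR a b h g = (\<Sum>j\<in>U. 2 * \<omega> (fst j) (snd j) - 1))"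
  using g
proof (induction n arbitrary: g)
  case 0
  then have "g = h" by simp
  then show ?case using ab h by (auto simp: XV_def AL_def DR_def SS_h PL_h intro!: exI[of _ "{}"])
next
  case (Suc n)
  then obtain g0 y where g0: "g0 \<in> ext h n" "g = g0 @ [y]" "y = last g0 + 1 \<or> y = last g0 - 1" by auto
  note IH = Suc.IH[OF g0(1)]
  have ne: "g0 \<noteq> []" by (rule ext_ne[OF h g0(1)])
  obtain xv al dr where S0: "SS a b h g0 = (g0, xv, al, dr)"
    using IH by (cases "SS a b h g0") auto
  have S1: "SS a b h g = (g, if al then y else xv, al \<and> a < y \<and> y < b, dr + (if al then 2 * pg g0 - 1 else 0))"
    unfolding g0(2) SS_snoc[OF g0(1)] S0 stp_def by simp
  have X0: "XV a b h g0 = xv" "AL a b h g0 = al" "DR a b h g0 = dr" using S0 by (auto simp: XV_def AL_def DR_def)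
  have X1: "XV a b h g = (if al then y else xv)" "AL a b h g = (al \<and> a < y \<and> y < b)"
      "DR a b h g = dr + (if al then 2 * pg g0 - 1 else 0)" using S1 by (auto simp: XV_def AL_def DR_def)
  have PLg: "PL h g = PL h g0 @ [y]" unfolding g0(2) by (rule PL_snoc[OF g0(1)])
  obtain U where U: "finite U" "\<forall>j\<in>U. a < fst j \<and> fst j < b \<and> 1 \<le> snd j \<and> snd j \<le> count_list (butlast g0) (fst j)"
      "dr = (\<Sum>j\<in>U. 2 * \<omega> (fst j) (snd j) - 1)"
    using IH X0 by blast
  have cnt: "count_list (butlast g) z = count_list (butlast g0) z + (if z = last g0 then 1 else 0)" for z
    unfolding g0(2) using count_snoc[OF ne] by simp
  have DRok: "\<exists>U. finite U \<and> (\<forall>j\<in>U. a < fst j \<and> fst j < b \<and> 1 \<le> snd j \<and> snd j \<le> count_list (butlast g) (fst j))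
           \<and> DR a b h g = (\<Sum>j\<in>U. 2 * \<omega> (fst j) (snd j) - 1)"
  proof (cases al)
    case False
    show ?thesis
    proof (intro exI conjI)
      show "finite U" by (rule U(1))
      show "\<forall>j\<in>U. a < fst j \<and> fst j < b \<and> 1 \<le> snd j \<and> snd j \<le> count_list (butlast g) (fst j)"
        using U(2) cnt by (metis add.right_neutral le_add1 order_trans)
      show "DR a b h g = (\<Sum>j\<in>U. 2 * \<omega> (fst j) (snd j) - 1)" using X1 U(3) False by simp
    qed
  next
    case True
    then have in0: "a < last g0" "last g0 < b" using IH X0 by auto
    have nU: "cdx g0 \<notin> U" using U(2) by (auto simp: cdx_def)
    show ?thesis
    proof (intro exI conjI)
      show "finite (insert (cdx g0) U)" using U(1) by simp
      show "\<forall>j\<in>insert (cdx g0) U. a < fst j \<and> fst j < b \<and> 1 \<le> snd j \<and> snd j \<le> count_list (butlast g) (fst j)"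
      proof
        fix j assume j: "j \<in> insert (cdx g0) U"
        show "a < fst j \<and> fst j < b \<and> 1 \<le> snd j \<and> snd j \<le> count_list (butlast g) (fst j)"
        proof (cases "j = cdx g0")
          case True then show ?thesis using in0 cnt[of "last g0"] by (simp add: cdx_def)
        next
          case False
          then have "a < fst j \<and> fst j < b \<and> 1 \<le> snd j \<and> snd j \<le> count_list (butlast g0) (fst j)" using j U(2) by auto
          then show ?thesis using cnt[of "fst j"] by linarith
        qed
      qed
      show "DR a b h g = (\<Sum>j\<in>insert (cdx g0) U. 2 * \<omega> (fst j) (snd j) - 1)"
        using X1 U(1,3) True nU by (simp add: pg_def cdx_def)
    qed
  qed
  have fst1: "fst (SS a b h g) = g" using S1 by simp
  show ?case
  proof (intro conjI)
    show "fst (SS a b h g) = g" by (rule fst1)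
    show "AL a b h g \<longrightarrow> XV a b h g = last g \<and> a < last g \<and> last g < b"
      using X1 g0(2) by auto
    show "a \<le> XV a b h g" using X1 IH X0 g0(3) by auto
    show "XV a b h g \<le> b" using X1 IH X0 g0(3) by auto
    show "\<not> AL a b h g \<longrightarrow> XV a b h g = a \<or> XV a b h g = b" using X1 IH X0 g0(3) by auto
    show "XV a b h g \<in> set (PL h g)" using X1 IH X0 PLg by auto
    show "AL a b h g \<longleftrightarrow> (\<forall>y\<in>set (PL h g). a < y \<and> y < b)" using X1 IH X0 PLg by auto
    show "\<exists>U. finite U \<and> (\<forall>j\<in>U. a < fst j \<and> fst j < b \<and> 1 \<le> snd j \<and> snd j \<le> count_list (butlast g) (fst j))
           \<and> DR a b h g = (\<Sum>j\<in>U. 2 * \<omega> (fst j) (snd j) - 1)" by (rule DRok)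
  qed
qed

lemma SS_snoc_parts:
  assumes "g \<in> ext h n"
  shows "XV a b h (g @ [y]) = (if AL a b h g then y else XV a b h g)"
    "AL a b h (g @ [y]) = (AL a b h g \<and> a < y \<and> y < b)"
proof -
  obtain g' xv al dr where S0: "SS a b h g = (g', xv, al, dr)" by (cases "SS a b h g") auto
  have S1: "SS a b h (g @ [y]) = (g' @ [y], if al then y else xv, al \<and> a < y \<and> y < b, dr + (if al then 2 * pg g' - 1 else 0))"
    unfolding SS_snoc[OF assms] S0 stp_def by simp
  note defs = XV_def AL_def DR_def
  show "XV a b h (g @ [y]) = (if AL a b h g then y else XV a b h g)" using S0 S1 by (simp add: defs)
  show "AL a b h (g @ [y]) = (AL a b h g \<and> a < y \<and> y < b)" using S0 S1 by (simp add: defs)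
qed

lemma SS_fst_snoc:
  assumes "h \<noteq> []" "a < last h" "last h < b" "g \<in> ext h n"
  shows "fst (SS a b h g) = g"
  using SS_inv[OF assms] by blast

lemma SS_snoc_DR:
  assumes "h \<noteq> []" "a < last h" "last h < b" "g \<in> ext h n"
  shows "DR a b h (g @ [y]) = DR a b h g + (if AL a b h g then 2 * pg g - 1 else 0)"
proof -
  obtain g' xv al dr where S0: "SS a b h g = (g', xv, al, dr)" by (cases "SS a b h g") auto
  have g': "g' = g" using SS_fst_snoc[OF assms] S0 by simp
  have S1: "SS a b h (g @ [y]) = (g' @ [y], if al then y else xv, al \<and> a < y \<and> y < b, dr + (if al then 2 * pg g' - 1 else 0))"
    unfolding SS_snoc[OF assms(4)] S0 stp_def by simp
  show ?thesis using S0 S1 g' by (simp add: AL_def DR_def)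
qed

lemma mart1:
  assumes h: "h \<noteq> []" and ab: "a < last h" "last h < b"
  shows "EE h n (\<lambda>g. real_of_int (XV a b h g) - DR a b h g) = real_of_int (last h)"
proof (induction n)
  case 0 then show ?case by (simp add: EE_0 XV_def DR_def SS_h)
next
  case (Suc n)
  have "EE h (Suc n) (\<lambda>g. real_of_int (XV a b h g) - DR a b h g) = EE h n (TT (\<lambda>g. real_of_int (XV a b h g) - DR a b h g))"
    by (rule EE_Suc[OF h])
  also have "\<dots> = EE h n (\<lambda>g. real_of_int (XV a b h g) - DR a b h g)"
  proof (rule EE_cong)
    fix g assume g: "g \<in> ext h n"
    note I = SS_inv[OF h ab g]
    show "TT (\<lambda>g. real_of_int (XV a b h g) - DR a b h g) g = real_of_int (XV a b h g) - DR a b h g"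
    proof (cases "AL a b h g")
      case True
      then have "XV a b h g = last g" using I by blast
      then show ?thesis using True unfolding TT_def SS_snoc_parts(1)[OF g] SS_snoc_DR[OF h ab g]
        by (simp add: algebra_simps)
    next
      case False
      then show ?thesis unfolding TT_def SS_snoc_parts(1)[OF g] SS_snoc_DR[OF h ab g]
        by (simp add: algebra_simps)
    qed
  qed
  finally show ?case using Suc by simp
qed

lemma DR_nonneg:
  assumes h: "h \<noteq> []" and ab: "a < last h" "last h < b" and g: "g \<in> ext h n"
  shows "0 \<le> DR a b h g"
proof -
  obtain U where U: "\<forall>j\<in>U. a < fst j \<and> fst j < b \<and> 1 \<le> snd j \<and> snd j \<le> count_list (butlast g) (fst j)"
      "DR a b h g = (\<Sum>j\<in>U. 2 * \<omega> (fst j) (snd j) - 1)"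
    using SS_inv[OF h ab g] by blast
  have "\<forall>j\<in>U. 0 \<le> 2 * \<omega> (fst j) (snd j) - 1"
  proof
    fix j assume "j \<in> U"
    then have "1 \<le> snd j" using U(1) by blast
    then have "1/2 \<le> \<omega> (fst j) (snd j)" using env unfolding cookie_env_def by blast
    then show "0 \<le> 2 * \<omega> (fst j) (snd j) - 1" by simp
  qed
  then show ?thesis using U(2) by (simp add: sum_nonneg)
qed

definition ALi where "ALi a b h g = (if AL a b h g then 1 else (0::real))"

lemma ALi_dec:
  assumes h: "h \<noteq> []"
  shows "EE h (Suc n) (ALi a b h) \<le> EE h n (ALi a b h)"
proof -
  have "EE h (Suc n) (ALi a b h) = EE h n (TT (ALi a b h))" by (rule EE_Suc[OF h])
  also have "\<dots> \<le> EE h n (ALi a b h)"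
  proof (rule EE_mono)
    fix g assume g: "g \<in> ext h n"
    show "TT (ALi a b h) g \<le> ALi a b h g"
      unfolding TT_def ALi_def SS_snoc_parts(2)[OF g] using pg_bounds[of g] by auto
  qed
  finally show ?thesis .
qed

lemma ALi_dec': "h \<noteq> [] \<Longrightarrow> k \<le> n \<Longrightarrow> EE h n (ALi a b h) \<le> EE h k (ALi a b h)"
proof (induction n)
  case 0 then show ?case by simp
next
  case (Suc n)
  show ?case
  proof (cases "k = Suc n")
    case False
    then have "k \<le> n" using Suc.prems by simp
    then show ?thesis using Suc.IH Suc.prems ALi_dec[of h n a b] by linarith
  qed simp
qed

lemma sq_bound:
  assumes h: "h \<noteq> []" and ab: "a < last h" "last h < b"
  shows "real n * EE h n (ALi a b h) \<le> (real_of_int (b - a))^2"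
proof -
  let ?F = "\<lambda>g. (real_of_int (XV a b h g - a))^2"
  have step: "EE h (Suc k) ?F \<ge> EE h k ?F + EE h k (ALi a b h)" for k
  proof -
    have "EE h (Suc k) ?F = EE h k (TT ?F)" by (rule EE_Suc[OF h])
    also have "\<dots> \<ge> EE h k (\<lambda>g. ?F g + ALi a b h g)"
    proof (rule EE_mono)
      fix g assume g: "g \<in> ext h k"
      note I = SS_inv[OF h ab g]
      show "?F g + ALi a b h g \<le> TT ?F g"
      proof (cases "AL a b h g")
        case True
        then have x: "XV a b h g = last g" "a < last g" using I by blast+
        define x where "x = real_of_int (last g - a)"
        have x0: "x \<ge> 0" using x unfolding x_def by simp
        have p: "2 * pg g - 1 \<ge> 0" using pg_bounds[of g] by simp
        have "x * (2 * pg g - 1) \<ge> 0" using x0 p by simp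
        then have key0: "x^2 + 1 \<le> pg g * (x + 1)^2 + (1 - pg g) * (x - 1)^2"
          by (simp add: power2_eq_square algebra_simps)
        have e1: "real_of_int (last g + 1 - a) = x + 1" and e2: "real_of_int (last g - 1 - a) = x - 1"
          unfolding x_def by simp_all
        have key: "(real_of_int (last g - a))^2 + 1 \<le> pg g * (real_of_int (last g + 1 - a))^2 + (1 - pg g) * (real_of_int (last g - 1 - a))^2"
          unfolding e1 e2 x_def[symmetric] by (rule key0)
        have t1: "TT ?F g = pg g * (real_of_int (last g + 1 - a))^2 + (1 - pg g) * (real_of_int (last g - 1 - a))^2"
          unfolding TT_def SS_snoc_parts(1)[OF g] using True by simp
        have t2: "?F g + ALi a b h g = (real_of_int (last g - a))^2 + 1" using True x(1) by (simp add: ALi_def)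
        show ?thesis using t1 t2 key by linarith
      next
        case False
        then show ?thesis unfolding TT_def SS_snoc_parts(1)[OF g] ALi_def by (simp add: algebra_simps)
      qed
    qed
    finally show ?thesis by (simp add: EE_add)
  qed
  have ind: "k \<le> n \<Longrightarrow> EE h k ?F \<ge> real k * EE h n (ALi a b h)" for k
  proof (induction k)
    case 0
    have "EE h 0 ?F \<ge> 0" by (simp add: EE_0)
    then show ?case by simp
  next
    case (Suc k)
    have "EE h (Suc k) ?F \<ge> EE h k ?F + EE h k (ALi a b h)" by (rule step)
    moreover have "EE h k (ALi a b h) \<ge> EE h n (ALi a b h)" using ALi_dec'[OF h, of k n] Suc.prems by simp
    ultimately show ?case using Suc by (simp add: algebra_simps)
  qed
  have "EE h n ?F \<le> EE h n (\<lambda>_. (real_of_int (b - a))^2)"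
  proof (rule EE_mono)
    fix g assume g: "g \<in> ext h n"
    note I = SS_inv[OF h ab g]
    then have "0 \<le> XV a b h g - a" "XV a b h g - a \<le> b - a" by auto
    then show "?F g \<le> (real_of_int (b - a))^2"
      by (intro power_mono) linarith+
  qed
  also have "\<dots> = (real_of_int (b - a))^2" by (rule EE_const[OF h])
  finally show ?thesis using ind[of n] by simp
qed

definition NH :: "int list \<Rightarrow> nat \<Rightarrow> (int \<times> nat \<Rightarrow> bool) set" where
  "NH h k = {c. \<forall>n\<le>k. last (gen c h n) \<noteq> 0}"

definition notHit :: "int list \<Rightarrow> (int \<times> nat \<Rightarrow> bool) set" where
  "notHit h = {c. \<forall>n. last (gen c h n) \<noteq> 0}"

definition uu :: "int list \<Rightarrow> real" where
  "uu h = measure M (notHit h)"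

definition av0 :: "int list \<Rightarrow> int list \<Rightarrow> bool" where
  "av0 h g = (\<forall>y\<in>set (PL h g). y \<noteq> 0)"

definition av0i :: "int list \<Rightarrow> int list \<Rightarrow> real" where
  "av0i h g = (if av0 h g then 1 else 0)"

lemma PL_gen: "h \<noteq> [] \<Longrightarrow> PL h (gen c h k) = map (\<lambda>n. last (gen c h n)) [0..<Suc k]"
proof (induction k)
  case 0 then show ?case by (simp add: PL_h)
next
  case (Suc k)
  have "PL h (gen c h (Suc k)) = PL h (gen c h k) @ [nxs c (gen c h k)]"
    using PL_snoc[OF gen_in_ext] by simp
  then show ?case using Suc by simp
qed

lemma NH_eq: "h \<noteq> [] \<Longrightarrow> NH h k = {c. av0 h (gen c h k)}"
  unfolding NH_def av0_def using PL_gen[of h] by (auto simp: less_Suc_eq_le)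

lemma sets_NH: "h \<noteq> [] \<Longrightarrow> NH h k \<in> sets M"
  unfolding NH_eq by (rule sets_gen)

lemma notHit_eq: "notHit h = (\<Inter>k. NH h k)"
  unfolding notHit_def NH_def by auto

lemma sets_notHit: "h \<noteq> [] \<Longrightarrow> notHit h \<in> sets M"
  unfolding notHit_eq using sets_NH by auto

lemma prob_NH: "h \<noteq> [] \<Longrightarrow> measure M (NH h k) = EE h k (av0i h)"
  unfolding NH_eq av0i_def by (rule EE_prob)

lemma NH_lim: "h \<noteq> [] \<Longrightarrow> (\<lambda>k. measure M (NH h k)) \<longlonglongrightarrow> uu h"
proof -
  assume h: "h \<noteq> []"
  interpret prob_space M by (rule prob_M)
  have "(\<lambda>k. measure M (NH h k)) \<longlonglongrightarrow> measure M (\<Inter>k. NH h k)"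
  proof (rule finite_Lim_measure_decseq)
    show "range (NH h) \<subseteq> sets M" using sets_NH[OF h] by auto
    show "decseq (NH h)" by (auto simp: decseq_def NH_def)
  qed
  then show ?thesis unfolding uu_def notHit_eq .
qed

lemma last_PL: "h \<noteq> [] \<Longrightarrow> g \<in> ext h n \<Longrightarrow> last g \<in> set (PL h g)"
proof -
  assume h: "h \<noteq> []" and g: "g \<in> ext h n"
  obtain t where t: "g = h @ t" using ext_shape[OF g] by blast
  have "PL h g = drop (length h - 1) h @ t" unfolding PL_def t using h by simp
  also have "drop (length h - 1) h = [last h]" using h by (cases h rule: rev_cases) auto
  finally show ?thesis using t h by (cases t rule: rev_cases) auto
qed

lemma PL_trans:
  assumes h: "h \<noteq> []" and g: "g \<in> ext h m" and g2: "g2 \<in> ext g k"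
  shows "set (PL h g2) = set (PL h g) \<union> set (PL g g2)"
proof -
  have ne: "g \<noteq> []" by (rule ext_ne[OF h g])
  obtain t where t: "g2 = g @ t" using ext_shape[OF g2] by blast
  have lh: "length h - 1 \<le> length g" using ext_shape[OF g] by auto
  have "PL h g2 = PL h g @ t" unfolding PL_def t using lh by simp
  moreover have "PL g g2 = [last g] @ t"
  proof -
    have "drop (length g - 1) g = [last g]" using ne by (cases g rule: rev_cases) auto
    then show ?thesis unfolding PL_def t by simp
  qed
  moreover have "last g \<in> set (PL h g)" by (rule last_PL[OF h g])
  ultimately show ?thesis by auto
qed

lemma pos_path:
  assumes h: "h \<noteq> []" "0 < last h" and g: "g \<in> ext h n" and a: "av0 h g"
  shows "\<forall>y\<in>set (PL h g). 0 < y"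
  using g a
proof (induction n arbitrary: g)
  case 0 then show ?case using h by (simp add: PL_h)
next
  case (Suc n)
  then obtain g0 y where g0: "g0 \<in> ext h n" "g = g0 @ [y]" "y = last g0 + 1 \<or> y = last g0 - 1" by auto
  have PLg: "PL h g = PL h g0 @ [y]" unfolding g0(2) by (rule PL_snoc[OF g0(1)])
  have a0: "av0 h g0" "y \<noteq> 0" using Suc.prems(2) PLg unfolding av0_def by auto
  have "\<forall>y\<in>set (PL h g0). 0 < y" by (rule Suc.IH[OF g0(1) a0(1)])
  moreover have "last g0 \<in> set (PL h g0)" by (rule last_PL[OF h(1) g0(1)])
  ultimately have "0 < last g0" by blast
  then have "0 < y" using g0(3) a0(2) by auto
  then show ?case using PLg \<open>\<forall>y\<in>set (PL h g0). 0 < y\<close> by auto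
qed

lemma uu_split:
  assumes h: "h \<noteq> []"
  shows "uu h \<le> EE h m (\<lambda>g. if av0 h g then uu g else 0)"
proof -
  interpret prob_space M by (rule prob_M)
  have bnd: "uu h \<le> EE h m (\<lambda>g. if av0 h g then measure M (NH g k) else 0)" for k
  proof -
    have "uu h \<le> measure M (NH h (m + k))"
      unfolding uu_def notHit_eq by (rule finite_measure_mono) (auto simp: sets_NH[OF h])
    also have "\<dots> = EE h (m + k) (av0i h)" by (rule prob_NH[OF h])
    also have "\<dots> = EE h m (\<lambda>g. EE g k (av0i h))" by (rule EE_tower[OF h])
    also have "\<dots> = EE h m (\<lambda>g. if av0 h g then measure M (NH g k) else 0)"
    proof (rule EE_cong)
      fix g assume g: "g \<in> ext h m"
      have ne: "g \<noteq> []" by (rule ext_ne[OF h g])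
      have "EE g k (av0i h) = EE g k (\<lambda>g2. (if av0 h g then 1 else 0) * av0i g g2)"
        by (rule EE_cong) (auto simp: av0i_def av0_def PL_trans[OF h g])
      also have "\<dots> = (if av0 h g then 1 else 0) * EE g k (av0i g)" by (rule EE_cmult)
      finally show "EE g k (av0i h) = (if av0 h g then measure M (NH g k) else 0)"
        using prob_NH[OF ne] by simp
    qed
    finally show ?thesis .
  qed
  have lim: "(\<lambda>k. EE h m (\<lambda>g. if av0 h g then measure M (NH g k) else 0)) \<longlonglongrightarrow> EE h m (\<lambda>g. if av0 h g then uu g else 0)"
    unfolding EE_def
  proof (intro tendsto_sum tendsto_mult_left)
    fix g assume g: "g \<in> ext h m"
    show "(\<lambda>k. if av0 h g then measure M (NH g k) else 0) \<longlonglongrightarrow> (if av0 h g then uu g else 0)"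
      using NH_lim[OF ext_ne[OF h g]] by (cases "av0 h g") auto
  qed
  show ?thesis by (rule LIMSEQ_le_const[OF lim]) (use bnd in blast)
qed

lemma drift_partial:
  assumes "drift \<omega> y \<noteq> \<infinity>"
  shows "(\<Sum>i\<in>{1..N}. 2 * \<omega> y i - 1) \<le> enn2real (drift \<omega> y)"
proof -
  have nn: "0 \<le> 2 * \<omega> y (Suc i) - 1" for i
  proof -
    have "1 \<le> Suc i" by simp
    then have "1/2 \<le> \<omega> y (Suc i)" using env unfolding cookie_env_def by blast
    then show ?thesis by simp
  qed
  have "(\<Sum>i\<in>{1..N}. 2 * \<omega> y i - 1) = (\<Sum>i<N. 2 * \<omega> y (Suc i) - 1)"
    by (induction N) (simp_all add: sum.cl_ivl_Suc)
  moreover have "ennreal (\<Sum>i<N. 2 * \<omega> y (Suc i) - 1) \<le> drift \<omega> y"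
  proof -
    have "ennreal (\<Sum>i<N. 2 * \<omega> y (Suc i) - 1) = (\<Sum>i<N. ennreal (2 * \<omega> y (Suc i) - 1))"
      using nn by (simp add: sum_ennreal)
    also have "\<dots> \<le> drift \<omega> y"
      unfolding drift_def by (rule sum_le_suminf) (auto intro: summableI)
    finally show ?thesis .
  qed
  ultimately show ?thesis
    using enn2real_mono[of "ennreal (\<Sum>i<N. 2 * \<omega> y (Suc i) - 1)" "drift \<omega> y"] assms nn
    by (simp add: sum_nonneg top.not_eq_extremum)
qed

lemma DR_bound:
  assumes h: "h \<noteq> []" and ab: "0 < last h" "last h < K" and g: "g \<in> ext h n"
    and fin: "\<forall>y\<in>{0<..<K}. drift \<omega> y \<noteq> \<infinity>"
  shows "DR 0 K h g \<le> (\<Sum>y\<in>{0<..<K}. enn2real (drift \<omega> y))"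
proof -
  obtain U where U: "finite U" "\<forall>j\<in>U. 0 < fst j \<and> fst j < K \<and> 1 \<le> snd j \<and> snd j \<le> count_list (butlast g) (fst j)"
      "DR 0 K h g = (\<Sum>j\<in>U. 2 * \<omega> (fst j) (snd j) - 1)"
    using SS_inv[OF h ab g] by blast
  define N where "N = length g"
  have cl: "count_list xs z \<le> length xs" for xs :: "int list" and z
    by (induction xs) auto
  have sub: "U \<subseteq> Sigma {0<..<K} (\<lambda>_. {1..N})"
  proof
    fix j assume j: "j \<in> U"
    then have "snd j \<le> count_list (butlast g) (fst j)" using U(2) by blast
    also have "\<dots> \<le> N" unfolding N_def using cl[of "butlast g" "fst j"] by simp
    finally show "j \<in> Sigma {0<..<K} (\<lambda>_. {1..N})" using U(2) j by (cases j) auto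
  qed
  have nn: "0 \<le> 2 * \<omega> (fst j) (snd j) - 1" if "j \<in> Sigma {0<..<K} (\<lambda>_. {1..N})" for j
  proof -
    have "1 \<le> snd j" using that by auto
    then have "1/2 \<le> \<omega> (fst j) (snd j)" using env unfolding cookie_env_def by blast
    then show ?thesis by simp
  qed
  have "DR 0 K h g \<le> (\<Sum>j\<in>Sigma {0<..<K} (\<lambda>_. {1..N}). 2 * \<omega> (fst j) (snd j) - 1)"
    unfolding U(3) by (rule sum_mono2) (use sub nn in auto)
  also have "\<dots> = (\<Sum>y\<in>{0<..<K}. \<Sum>i\<in>{1..N}. 2 * \<omega> y i - 1)"
    by (subst sum.Sigma) (auto simp: split_beta)
  also have "\<dots> \<le> (\<Sum>y\<in>{0<..<K}. enn2real (drift \<omega> y))"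
    by (rule sum_mono) (use fin drift_partial in auto)
  finally show ?thesis .
qed

lemma le_lim_helper:
  fixes x C R :: real
  assumes "\<And>m::nat. m > 0 \<Longrightarrow> x \<le> C / real m + R"
  shows "x \<le> R"
proof -
  have "(\<lambda>m. C / real m + R) \<longlonglongrightarrow> 0 + R"
    by (intro tendsto_add lim_const_over_n tendsto_const)
  then have "(\<lambda>m. C / real m + R) \<longlonglongrightarrow> R" by simp
  then show ?thesis
    by (rule LIMSEQ_le_const) (use assms in \<open>auto intro!: exI[of _ 1]\<close>)
qed

lemma uu_bounds: "0 \<le> uu g" "uu g \<le> 1"
proof -
  interpret prob_space M by (rule prob_M)
  show "0 \<le> uu g" "uu g \<le> 1" unfolding uu_def by simp_all
qed

lemma pos_step:
  assumes h: "h \<noteq> []" and ab: "0 < last h" "last h < K"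
    and fin: "\<forall>y\<in>{0<..<K}. drift \<omega> y \<noteq> \<infinity>" and s: "0 \<le> s"
    and sb: "\<And>g. g \<noteq> [] \<Longrightarrow> 0 < last g \<Longrightarrow> uu g \<le> s"
  shows "uu h \<le> s * (real_of_int (last h) + (\<Sum>y\<in>{0<..<K}. enn2real (drift \<omega> y))) / real_of_int K"
proof -
  define Bd where "Bd = (\<Sum>y\<in>{0<..<K}. enn2real (drift \<omega> y))"
  have K0: "0 < K" using ab by simp
  have main: "uu h \<le> (real_of_int K)^2 / real m + s * (real_of_int (last h) + Bd) / real_of_int K" if m: "m > 0" for m
  proof -
    have "uu h \<le> EE h m (\<lambda>g. if av0 h g then uu g else 0)" by (rule uu_split[OF h])
    also have "\<dots> \<le> EE h m (\<lambda>g. ALi 0 K h g + (s / real_of_int K) * real_of_int (XV 0 K h g))"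
    proof (rule EE_mono)
      fix g assume g: "g \<in> ext h m"
      note I = SS_inv[OF h ab g]
      have xv0: "0 \<le> XV 0 K h g" using I by blast
      have t0: "0 \<le> (s / real_of_int K) * real_of_int (XV 0 K h g)" using xv0 s K0 by simp
      have A0: "0 \<le> ALi 0 K h g" by (simp add: ALi_def)
      show "(if av0 h g then uu g else 0) \<le> ALi 0 K h g + (s / real_of_int K) * real_of_int (XV 0 K h g)"
      proof (cases "av0 h g")
        case False then show ?thesis using t0 A0 by simp
      next
        case True
        show ?thesis
        proof (cases "AL 0 K h g")
          case True
          then show ?thesis using t0 uu_bounds[of g] \<open>av0 h g\<close> by (simp add: ALi_def)
        next
          case False
          have "XV 0 K h g \<noteq> 0" using I \<open>av0 h g\<close> unfolding av0_def by blast
          then have "XV 0 K h g = K" using I False by blast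
          then have e: "(s / real_of_int K) * real_of_int (XV 0 K h g) = s" using K0 by simp
          have "0 < last g" using pos_path[OF h ab(1) g \<open>av0 h g\<close>] last_PL[OF h g] by blast
          then have "uu g \<le> s" using sb ext_ne[OF h g] by blast
          then show ?thesis using e A0 \<open>av0 h g\<close> by simp
        qed
      qed
    qed
    also have "\<dots> = EE h m (ALi 0 K h) + (s / real_of_int K) * EE h m (\<lambda>g. real_of_int (XV 0 K h g))"
      using EE_add[of h m "ALi 0 K h" "\<lambda>g. (s / real_of_int K) * real_of_int (XV 0 K h g)"]
        EE_cmult[of h m "s / real_of_int K" "\<lambda>g. real_of_int (XV 0 K h g)"] by (simp only:)
    also have "EE h m (ALi 0 K h) \<le> (real_of_int K)^2 / real m"
      using sq_bound[OF h ab, of m] m by (simp add: field_simps)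
    also have "EE h m (\<lambda>g. real_of_int (XV 0 K h g)) \<le> real_of_int (last h) + Bd"
    proof -
      have "EE h m (\<lambda>g. real_of_int (XV 0 K h g)) = EE h m (\<lambda>g. real_of_int (XV 0 K h g) - DR 0 K h g) + EE h m (DR 0 K h)"
        by (simp add: EE_add[symmetric])
      also have "\<dots> = real_of_int (last h) + EE h m (DR 0 K h)" using mart1[OF h ab] by simp
      also have "EE h m (DR 0 K h) \<le> EE h m (\<lambda>_. Bd)"
        by (rule EE_mono) (unfold Bd_def, rule DR_bound[OF h ab _ fin], assumption)
      also have "EE h m (\<lambda>_. Bd) = Bd" by (rule EE_const[OF h])
      finally show ?thesis by simp
    qed
    then have "(s / real_of_int K) * EE h m (\<lambda>g. real_of_int (XV 0 K h g)) \<le> (s / real_of_int K) * (real_of_int (last h) + Bd)"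
      using s K0 by (intro mult_left_mono) auto
    finally show ?thesis by simp
  qed
  show ?thesis unfolding Bd_def[symmetric] by (rule le_lim_helper[OF main])
qed

lemma neg_zero:
  assumes h: "h \<noteq> []" and z: "last h < 0"
  shows "uu h = 0"
proof -
  interpret prob_space M by (rule prob_M)
  have bndL: "uu h \<le> real_of_int (- last h) / real L" if L: "int L > - last h" for L :: nat
  proof -
    define a where "a = - int L"
    have ab: "a < last h" "last h < 0" using L z unfolding a_def by auto
    have Lpos: "real L > 0" using L z by simp
    have main: "uu h \<le> (real_of_int (0 - a))^2 / real m + real_of_int (- last h) / real L" if m: "m > 0" for m
    proof -
      have "uu h \<le> measure M (NH h m)"
        unfolding uu_def notHit_eq by (rule finite_measure_mono) (auto simp: sets_NH[OF h])
      also have "\<dots> = EE h m (av0i h)" by (rule prob_NH[OF h])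
      also have "\<dots> \<le> EE h m (\<lambda>g. ALi a 0 h g + (if XV a 0 h g = a then 1 else 0))"
      proof (rule EE_mono)
        fix g assume g: "g \<in> ext h m"
        note I = SS_inv[OF h ab g]
        show "av0i h g \<le> ALi a 0 h g + (if XV a 0 h g = a then 1 else 0)"
        proof (cases "av0 h g \<and> \<not> AL a 0 h g")
          case True
          then have "XV a 0 h g \<noteq> 0" using I unfolding av0_def by blast
          then have "XV a 0 h g = a" using I True by blast
          then show ?thesis by (simp add: ALi_def av0i_def)
        next
          case False then show ?thesis by (auto simp: ALi_def av0i_def)
        qed
      qed
      also have "\<dots> = EE h m (ALi a 0 h) + EE h m (\<lambda>g. if XV a 0 h g = a then 1 else 0)"
        by (rule EE_add)
      also have "EE h m (ALi a 0 h) \<le> (real_of_int (0 - a))^2 / real m"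
        using sq_bound[OF h ab, of m] m by (simp add: field_simps)
      also have "EE h m (\<lambda>g. if XV a 0 h g = a then 1 else 0) \<le> real_of_int (- last h) / real L"
      proof -
        have "real_of_int (last h) \<le> EE h m (\<lambda>g. real_of_int (XV a 0 h g))"
        proof -
          have "EE h m (\<lambda>g. real_of_int (XV a 0 h g)) = EE h m (\<lambda>g. real_of_int (XV a 0 h g) - DR a 0 h g) + EE h m (DR a 0 h)"
            by (simp add: EE_add[symmetric])
          also have "\<dots> = real_of_int (last h) + EE h m (DR a 0 h)" using mart1[OF h ab] by simp
          finally have e1: "EE h m (\<lambda>g. real_of_int (XV a 0 h g)) = real_of_int (last h) + EE h m (DR a 0 h)" .
          have "EE h m (DR a 0 h) \<ge> EE h m (\<lambda>_. 0)"
            by (rule EE_mono) (rule DR_nonneg[OF h ab])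
          then have "EE h m (DR a 0 h) \<ge> 0" using EE_const[OF h, of m 0] by simp
          then show ?thesis using e1 by linarith
        qed
        also have "EE h m (\<lambda>g. real_of_int (XV a 0 h g)) \<le> EE h m (\<lambda>g. - real L * (if XV a 0 h g = a then 1 else 0))"
        proof (rule EE_mono)
          fix g assume g: "g \<in> ext h m"
          note I = SS_inv[OF h ab g]
          show "real_of_int (XV a 0 h g) \<le> - real L * (if XV a 0 h g = a then 1 else 0)"
            using I unfolding a_def by auto
        qed
        also have "\<dots> = - real L * EE h m (\<lambda>g. if XV a 0 h g = a then 1 else 0)" by (rule EE_cmult)
        finally have "real L * EE h m (\<lambda>g. if XV a 0 h g = a then 1 else 0) \<le> real_of_int (- last h)" by simp
        then show ?thesis using Lpos by (simp add: field_simps)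
      qed
      finally show ?thesis by simp
    qed
    show ?thesis by (rule le_lim_helper[OF main])
  qed
  have "uu h \<le> 0"
  proof (rule le_lim_helper[where C="real_of_int (- last h)"])
    fix L :: nat assume "L > 0"
    have "uu h \<le> real_of_int (- last h) / real (L + nat (- last h))"
      by (rule bndL) (use \<open>L > 0\<close> z in simp)
    also have "\<dots> \<le> real_of_int (- last h) / real L"
      using z \<open>L > 0\<close> by (intro divide_left_mono) auto
    finally show "uu h \<le> real_of_int (- last h) / real L + 0" by simp
  qed
  then show ?thesis using uu_bounds[of h] by simp
qed

end

lemma liminf_extract:
  fixes d :: "int \<Rightarrow> ennreal"
  assumes "liminf (\<lambda>K::nat. (\<Sum>x<K. d (int x)) / of_nat K) < 1"
  shows "\<exists>r::real. 0 \<le> r \<and> r < 1 \<and> (\<forall>N. \<exists>K\<ge>N. K > 0 \<and> (\<forall>x<K. d (int x) \<noteq> \<infinity>) \<and> (\<Sum>x<K. enn2real (d (int x))) \<le> r * real K)"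
proof -
  let ?X = "\<lambda>K::nat. (\<Sum>x<K. d (int x)) / of_nat K"
  have "\<not> (1 \<le> liminf ?X)" using assms by simp
  then obtain y where y: "y < 1" "\<not> eventually (\<lambda>K. y < ?X K) sequentially"
    unfolding le_Liminf_iff by blast
  have "y < top" using y(1) ennreal_less_top[of 1] by (metis ennreal_1 order.strict_trans)
  then obtain r0 where r0: "0 \<le> r0" "y = ennreal r0" using less_top_ennreal by blast
  have "ennreal r0 < ennreal 1" using y(1) r0(2) by simp
  then have r1: "r0 < 1" using ennreal_less_iff[OF r0(1)] by blast
  have fr: "\<forall>N. \<exists>K\<ge>N. ?X K \<le> y"
    using y(2) unfolding not_eventually frequently_sequentially by (auto simp: not_less)
  show ?thesis
  proof (rule exI[of _ r0], intro conjI allI)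
    show "0 \<le> r0" "r0 < 1" by (fact r0(1)) (fact r1)
    fix N
    obtain K where K: "K \<ge> max N 1" "?X K \<le> y" using fr by blast
    have Kp: "K > 0" using K(1) by simp
    define S where "S = (\<Sum>x<K. d (int x))"
    have b: "(of_nat K :: ennreal) \<noteq> 0" "(of_nat K :: ennreal) \<noteq> top" using Kp by auto
    have "S = (S / of_nat K) * of_nat K"
    proof -
      have "(of_nat K :: ennreal) / of_nat K = 1" using b by (simp add: divide_eq_1_ennreal)
      then show ?thesis by (simp add: ennreal_divide_times)
    qed
    also have "\<dots> \<le> ennreal r0 * of_nat K" using K(2) r0 unfolding S_def by (intro mult_right_mono) auto
    also have "\<dots> = ennreal (r0 * real K)" using r0(1) by (simp add: ennreal_mult ennreal_of_nat_eq_real_of_nat)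
    finally have Sle: "S \<le> ennreal (r0 * real K)" .
    then have Stop: "S \<noteq> top" using ennreal_less_top[of "r0 * real K"] by (metis order.strict_trans1 less_irrefl)
    have fin: "\<forall>x<K. d (int x) \<noteq> \<infinity>" using Stop unfolding S_def by auto
    have "(\<Sum>x<K. enn2real (d (int x))) = enn2real S"
      unfolding S_def using fin by (subst enn2real_sum) (auto simp: o_def top.not_eq_extremum)
    also have "\<dots> \<le> enn2real (ennreal (r0 * real K))" using Sle by (intro enn2real_mono) auto
    also have "\<dots> = r0 * real K" using r0(1) by simp
    finally show "\<exists>K\<ge>N. K > 0 \<and> (\<forall>x<K. d (int x) \<noteq> \<infinity>) \<and> (\<Sum>x<K. enn2real (d (int x))) \<le> r0 * real K"
      using K(1) Kp fin by (intro exI[of _ K]) auto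
  qed
qed

context cenv begin

lemma pos_zero:
  assumes hyp: "liminf (\<lambda>K::nat. (\<Sum>x<K. drift \<omega> (int x)) / of_nat K) < 1"
    and g: "g \<noteq> []" "0 < last g"
  shows "uu g = 0"
proof -
  obtain r :: real where r: "0 \<le> r" "r < 1"
    and fr: "\<And>N. \<exists>K\<ge>N. K > 0 \<and> (\<forall>x<K. drift \<omega> (int x) \<noteq> \<infinity>) \<and> (\<Sum>x<K. enn2real (drift \<omega> (int x))) \<le> r * real K"
    using liminf_extract[OF hyp] by blast
  define G where "G = {g :: int list. g \<noteq> [] \<and> 0 < last g}"
  define s where "s = Sup (uu ` G)"
  have bdd: "bdd_above (uu ` G)" using uu_bounds by (auto intro!: bdd_aboveI[of _ 1])
  have neG: "G \<noteq> {}" unfolding G_def by (auto intro!: exI[of _ "[1]"])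
  have s_ub: "uu g' \<le> s" if "g' \<in> G" for g' unfolding s_def using bdd that by (intro cSup_upper) auto
  have s0: "0 \<le> s" using s_ub[of "[1]"] uu_bounds[of "[1]"] unfolding G_def by simp
  define q where "q = (1 + r) / 2"
  have claim: "uu g' \<le> s * q" if g': "g' \<in> G" for g'
  proof -
    have g'': "g' \<noteq> []" "0 < last g'" using g' unfolding G_def by auto
    define z where "z = last g'"
    define N where "N = nat (ceiling (2 * real_of_int z / (1 - r))) + nat z + 1"
    obtain K where K: "K \<ge> N" "K > 0" "\<forall>x<K. drift \<omega> (int x) \<noteq> \<infinity>"
        "(\<Sum>x<K. enn2real (drift \<omega> (int x))) \<le> r * real K"
      using fr[of N] by blast
    have zK: "z < int K" using K(1) unfolding N_def by linarith
    have zK2: "2 * real_of_int z \<le> (1 - r) * real K"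
    proof -
      have "2 * real_of_int z / (1 - r) \<le> real K"
        using K(1) unfolding N_def by linarith
      then show ?thesis using r by (simp add: field_simps)
    qed
    have fin: "\<forall>y\<in>{0<..<int K}. drift \<omega> y \<noteq> \<infinity>"
    proof
      fix y assume y: "y \<in> {0<..<int K}"
      then have "nat y < K" "int (nat y) = y" by auto
      then show "drift \<omega> y \<noteq> \<infinity>" using K(3) by metis
    qed
    have "uu g' \<le> s * (real_of_int z + (\<Sum>y\<in>{0<..<int K}. enn2real (drift \<omega> y))) / real_of_int (int K)"
      unfolding z_def by (rule pos_step[OF g''(1) g''(2) zK[unfolded z_def] fin s0 s_ub]) (simp add: G_def)
    also have "(\<Sum>y\<in>{0<..<int K}. enn2real (drift \<omega> y)) \<le> (\<Sum>y\<in>int ` {..<K}. enn2real (drift \<omega> y))"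
    proof (rule sum_mono2)
      show "finite (int ` {..<K})" by simp
      show "{0<..<int K} \<subseteq> int ` {..<K}"
      proof
        fix y assume y: "y \<in> {0<..<int K}"
        then have "nat y \<in> {..<K}" "y = int (nat y)" by auto
        then show "y \<in> int ` {..<K}" by blast
      qed
    qed auto
    also have "\<dots> = (\<Sum>x<K. enn2real (drift \<omega> (int x)))" by (subst sum.reindex) auto
    also have "\<dots> \<le> r * real K" by (rule K(4))
    finally have "uu g' \<le> s * (real_of_int z + r * real K) / real K"
      using s0 K(2) by (simp add: divide_right_mono mult_left_mono)
    also have "\<dots> \<le> s * q"
    proof -
      have "real_of_int z + r * real K \<le> q * real K" using zK2 unfolding q_def by (simp add: field_simps)
      then have "(real_of_int z + r * real K) / real K \<le> q" using K(2) by (simp add: field_simps)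
      then show ?thesis using s0 by (metis mult_left_mono times_divide_eq_right)
    qed
    finally show ?thesis .
  qed
  have "s \<le> s * q" unfolding s_def[symmetric] using claim neG
    by (subst s_def) (intro cSup_least, auto)
  moreover have "q < 1" using r unfolding q_def by simp
  ultimately have "s \<le> 0" using s0 by (metis less_le_not_le mult_less_cancel_left2 not_le)
  moreover have "uu g \<le> s" using s_ub g unfolding G_def by blast
  ultimately show ?thesis using uu_bounds[of g] by simp
qed

lemma uu_zero:
  assumes hyp: "liminf (\<lambda>K::nat. (\<Sum>x<K. drift \<omega> (int x)) / of_nat K) < 1"
    and g: "g \<noteq> []"
  shows "uu g = 0"
proof (cases "last g" "0::int" rule: linorder_cases)
  case less then show ?thesis by (rule neg_zero[OF g])
next
  case equal
  then have "notHit g = {}" unfolding notHit_def by (auto intro!: exI[of _ 0])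
  then show ?thesis unfolding uu_def by simp
next
  case greater then show ?thesis by (rule pos_zero[OF hyp g])
qed

lemma notHit_null:
  assumes hyp: "liminf (\<lambda>K::nat. (\<Sum>x<K. drift \<omega> (int x)) / of_nat K) < 1"
    and g: "g \<noteq> []"
  shows "notHit g \<in> null_sets M"
proof -
  interpret prob_space M by (rule prob_M)
  have "measure M (notHit g) = 0" using uu_zero[OF hyp g] unfolding uu_def .
  then have "emeasure M (notHit g) = 0" using sets_notHit[OF g] by (simp add: emeasure_eq_measure)
  then show ?thesis using sets_notHit[OF g] by auto
qed

lemma recurrence:
  assumes hyp: "liminf (\<lambda>K::nat. (\<Sum>x<K. drift \<omega> (int x)) / of_nat K) < 1"
  shows "measure M {c \<in> space M. \<forall>N. \<exists>n\<ge>N. walk c x n = 0} = 1"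
proof -
  interpret prob_space M by (rule prob_M)
  define A where "A = {c. \<forall>N. \<exists>n\<ge>N. last (gen c [x] n) = 0}"
  have eqA: "{c \<in> space M. \<forall>N. \<exists>n\<ge>N. walk c x n = 0} = A" unfolding A_def walk_eq by simp
  have Ameas: "A \<in> sets M"
  proof -
    have "A = (\<Inter>N. \<Union>n\<in>{N..}. {c. last (gen c [x] n) = 0})" unfolding A_def by auto
    also have "\<dots> \<in> sets M" using sets_gen[of "\<lambda>g. last g = 0" "[x]"] by auto
    finally show ?thesis .
  qed
  define Z where "Z = (\<Union>N. \<Union>g\<in>ext [x] N. notHit g)"
  have Znull: "Z \<in> null_sets M"
    unfolding Z_def
  proof (intro null_sets_UN null_sets_UN')
    fix N g assume "g \<in> ext [x] N"
    then show "notHit g \<in> null_sets M" using notHit_null[OF hyp] ext_ne[of "[x]" g N] by simp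
  qed (simp add: finite_ext countable_finite)
  have sub: "space M - A \<subseteq> Z"
  proof
    fix c assume "c \<in> space M - A"
    then obtain N where N: "\<forall>n\<ge>N. last (gen c [x] n) \<noteq> 0" unfolding A_def by auto
    have "c \<in> notHit (gen c [x] N)"
      unfolding notHit_def
    proof (intro CollectI allI)
      fix n
      have "last (gen c [x] (N + n)) \<noteq> 0" using N by simp
      then show "last (gen c (gen c [x] N) n) \<noteq> 0" by (simp add: gen_add)
    qed
    then show "c \<in> Z" unfolding Z_def using gen_in_ext[of c "[x]" N] by blast
  qed
  have "emeasure M (space M - A) \<le> emeasure M Z" by (rule emeasure_mono[OF sub]) (use Znull in auto)
  then have "emeasure M (space M - A) = 0" using Znull by auto
  then have "prob (space M - A) = 0" by (simp add: measure_def)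
  then show ?thesis unfolding eqA using prob_compl[OF Ameas] by simp
qed

end

theorem mainTheorem7:
  fixes \<omega> :: "int \<Rightarrow> nat \<Rightarrow> real"
  assumes "cookie_env \<omega>"
    and "liminf (\<lambda>K::nat. (\<Sum>x<K. drift \<omega> (int x)) / of_nat K) < 1"
  shows "recurrent_site \<omega> 0"
proof -
  interpret cenv \<omega> by (unfold_locales) (rule assms(1))
  show ?thesis unfolding recurrent_site_def using recurrence[OF assms(2)] by blast
qed

end
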